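(* Let $\mathbb{S}$ be a metric space with its Borel $\sigma$-field, let $\{\mu_n\}_{n=1,2,\ldots}$ be a sequence of measures on $\mathbb{S}$ converging weakly to a finite measure $\mu$ on $\mathbb{S}$, and let $\{f_n,g_n\}_{n=1,2,\ldots}$ be measurable $[-\infty,+\infty]$-valued functions on $\mathbb{S}$ such that $f_n(s)\ge g_n(s)$ for all $n$ and $s\in\mathbb{S}$, and $$-\infty<\int_{\mathbb{S}}\limsup_{n\to\infty,\,s'\to s} g_n(s')\,\mu(ds)\le\liminf_{n\to\infty}\int_{\mathbb{S}} g_n(s)\,\mu_n(ds).$$ Then $$\int_{\mathbb{S}}\liminf_{n\to\infty,\,s'\to s} f_n(s')\,\mu(ds)\le\liminf_{n\to\infty}\int_{\mathbb{S}} f_n(s)\,\mu_n(ds).$$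
   Context: Weak convergence: $\int f\,d\mu_n\to\int f\,d\mu$ for all bounded continuous $f$. Integrals of extended-real functions are $\int f^+-\int f^-$, defined when one of these is finite; all integrals in the hypotheses are assumed defined. $\liminf_{n\to\infty,s'\to s}f_n(s'):=\sup_{n\ge1,\delta>0}\inf_{m\ge n,\,s'\in B_\delta(s)}f_m(s')$ and $\limsup_{n\to\infty,s'\to s}g_n(s'):=\inf_{n\ge1,\delta>0}\sup_{m\ge n,\,s'\in B_\delta(s)}g_m(s')$, with $B_\delta(s)$ the ball of radius $\delta$ about $s$. *)

theory Defs
  imports "HOL-Analysis.Analysis"
begin

definition pos_int :: "'a measure \<Rightarrow> ('a \<Rightarrow> ereal) \<Rightarrow> ennreal" where
  "pos_int M f = (\<integral>\<^sup>+ x. e2ennreal (max 0 (f x)) \<partial>M)"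

definition neg_int :: "'a measure \<Rightarrow> ('a \<Rightarrow> ereal) \<Rightarrow> ennreal" where
  "neg_int M f = (\<integral>\<^sup>+ x. e2ennreal (max 0 (- f x)) \<partial>M)"

definition eint_defined :: "'a measure \<Rightarrow> ('a \<Rightarrow> ereal) \<Rightarrow> bool" where
  "eint_defined M f \<longleftrightarrow> pos_int M f < \<infinity> \<or> neg_int M f < \<infinity>"

definition eint :: "'a measure \<Rightarrow> ('a \<Rightarrow> ereal) \<Rightarrow> ereal" where
  "eint M f = enn2ereal (pos_int M f) - enn2ereal (neg_int M f)"

definition weak_conv :: "(nat \<Rightarrow> 'a::metric_space measure) \<Rightarrow> 'a measure \<Rightarrow> bool" where
  "weak_conv Mn M \<longleftrightarrow> (\<forall>f::'a \<Rightarrow> real. continuous_on UNIV f \<and> bounded (range f) \<longrightarrow>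
      (\<lambda>n. eint (Mn n) (\<lambda>x. ereal (f x))) \<longlonglongrightarrow> eint M (\<lambda>x. ereal (f x)))"

definition joint_liminf :: "(nat \<Rightarrow> 'a::metric_space \<Rightarrow> ereal) \<Rightarrow> 'a \<Rightarrow> ereal" where
  "joint_liminf f s = (SUP n\<in>{1..}. SUP \<delta>\<in>{(0::real)<..}. INF m\<in>{n..}. INF s'\<in>ball s \<delta>. f m s')"

definition joint_limsup :: "(nat \<Rightarrow> 'a::metric_space \<Rightarrow> ereal) \<Rightarrow> 'a \<Rightarrow> ereal" where
  "joint_limsup g s = (INF n\<in>{1..}. INF \<delta>\<in>{(0::real)<..}. SUP m\<in>{n..}. SUP s'\<in>ball s \<delta>. g m s')"

end

theory Submission
  imports Defs
begin

lemma eint_mono_AE: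
  assumes "AE x in M. f x \<le> g x"
  shows "eint M f \<le> eint M g"
proof -
  have "pos_int M f \<le> pos_int M g" unfolding pos_int_def
    by (rule nn_integral_mono_AE) (use assms in \<open>auto elim!: eventually_mono intro!: e2ennreal_mono max.mono\<close>)
  moreover have "neg_int M g \<le> neg_int M f" unfolding neg_int_def
    by (rule nn_integral_mono_AE) (use assms in \<open>auto elim!: eventually_mono intro!: e2ennreal_mono max.mono\<close>)
  ultimately show ?thesis unfolding eint_def
    by (intro ereal_minus_mono) (auto simp: less_eq_ennreal.rep_eq[symmetric])
qed

lemma eint_nonneg:
  assumes "\<And>x. 0 \<le> f x"
  shows "eint M f = enn2ereal (\<integral>\<^sup>+ x. e2ennreal (f x) \<partial>M)"
proof -
  have "neg_int M f = 0" unfolding neg_int_def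
    using assms by (simp add: max_def e2ennreal_neg)
  moreover have "pos_int M f = (\<integral>\<^sup>+ x. e2ennreal (f x) \<partial>M)" unfolding pos_int_def
    using assms by (simp add: max_def)
  ultimately show ?thesis unfolding eint_def by (simp add: zero_ennreal.rep_eq)
qed

lemma joint_liminf_meas: "joint_liminf f \<in> borel_measurable borel"
proof (rule borel_measurableI_greater)
  fix t
  have "open {x. t < joint_liminf f x}"
  proof (rule openI)
    fix s assume "s \<in> {x. t < joint_liminf f x}"
    then obtain n \<delta> where n: "n \<ge> 1" "\<delta> > 0" and lt: "t < (INF m\<in>{n..}. INF s'\<in>ball s \<delta>. f m s')"
      unfolding joint_liminf_def by (auto simp: less_SUP_iff)
    have "ball s (\<delta>/2) \<subseteq> {x. t < joint_liminf f x}"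
    proof
      fix x assume x: "x \<in> ball s (\<delta>/2)"
      have "ball x (\<delta>/2) \<subseteq> ball s \<delta>"
      proof
        fix y assume "y \<in> ball x (\<delta>/2)"
        then show "y \<in> ball s \<delta>" using x dist_triangle[of s y x] by auto
      qed
      then have "(INF m\<in>{n..}. INF s'\<in>ball s \<delta>. f m s') \<le> (INF m\<in>{n..}. INF s'\<in>ball x (\<delta>/2). f m s')"
        by (intro INF_mono) (auto intro!: INF_superset_mono)
      also have "\<dots> \<le> joint_liminf f x" unfolding joint_liminf_def
        using n by (intro SUP_upper2[of n] SUP_upper2[of "\<delta>/2"]) auto
      finally show "x \<in> {x. t < joint_liminf f x}" using lt by auto
    qed
    then show "\<exists>e>0. ball s e \<subseteq> {x. t < joint_liminf f x}" using n by (intro exI[of _ "\<delta>/2"]) auto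
  qed
  then show "{x \<in> space borel. t < joint_liminf f x} \<in> sets borel" by auto
qed

lemma joint_limsup_meas: "joint_limsup f \<in> borel_measurable borel"
proof (rule borel_measurableI_less)
  fix t
  have "open {x. joint_limsup f x < t}"
  proof (rule openI)
    fix s assume "s \<in> {x. joint_limsup f x < t}"
    then obtain n \<delta> where n: "n \<ge> 1" "\<delta> > 0" and lt: "(SUP m\<in>{n..}. SUP s'\<in>ball s \<delta>. f m s') < t"
      unfolding joint_limsup_def by (auto simp: INF_less_iff)
    have "ball s (\<delta>/2) \<subseteq> {x. joint_limsup f x < t}"
    proof
      fix x assume x: "x \<in> ball s (\<delta>/2)"
      have "ball x (\<delta>/2) \<subseteq> ball s \<delta>"
      proof
        fix y assume "y \<in> ball x (\<delta>/2)"
        then show "y \<in> ball s \<delta>" using x dist_triangle[of s y x] by auto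
      qed
      have "joint_limsup f x \<le> (SUP m\<in>{n..}. SUP s'\<in>ball x (\<delta>/2). f m s')" unfolding joint_limsup_def
        using n by (intro INF_lower2[of n] INF_lower2[of "\<delta>/2"]) auto
      also have "\<dots> \<le> (SUP m\<in>{n..}. SUP s'\<in>ball s \<delta>. f m s')"
        using \<open>ball x (\<delta>/2) \<subseteq> ball s \<delta>\<close>
        by (intro SUP_mono) (auto intro!: SUP_subset_mono)
      finally show "x \<in> {x. joint_limsup f x < t}" using lt by auto
    qed
    then show "\<exists>e>0. ball s e \<subseteq> {x. joint_limsup f x < t}" using n by (intro exI[of _ "\<delta>/2"]) auto
  qed
  then show "{x \<in> space borel. joint_limsup f x < t} \<in> sets borel" by auto
qed

lemma lsc_approx:
  fixes u :: "nat \<Rightarrow> 'a::metric_space \<Rightarrow> ereal"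
  assumes u0: "\<And>n s. 0 \<le> u n s"
  defines "T \<equiv> \<lambda>K y. real_of_ereal (min (ereal (real K)) (INF m\<in>{K..}. u m y))"
  defines "\<psi> \<equiv> \<lambda>K s. (INF y. T K y + real K * dist s y)"
  shows psi_cont: "continuous_on UNIV (\<psi> K)"
    and psi_bdd: "bounded (range (\<psi> K))"
    and psi_nonneg: "0 \<le> \<psi> K s"
    and psi_le: "K \<le> n \<Longrightarrow> ereal (\<psi> K s) \<le> u n s"
    and psi_ge: "\<lbrakk>\<delta> > 0; ereal t < (INF m\<in>{n..}. INF s'\<in>ball s \<delta>. u m s'); n \<le> K; t \<le> real K; t \<le> real K * \<delta>\<rbrakk>
       \<Longrightarrow> t \<le> \<psi> K s"
proof -
  have Tfin: "ereal (T K y) = min (ereal (real K)) (INF m\<in>{K..}. u m y)" for K y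
  proof -
    have "0 \<le> (INF m\<in>{K..}. u m y)" using u0 by (auto intro: INF_greatest)
    then have "0 \<le> min (ereal (real K)) (INF m\<in>{K..}. u m y)" by auto
    moreover have "min (ereal (real K)) (INF m\<in>{K..}. u m y) \<le> ereal (real K)" by auto
    ultimately show ?thesis unfolding T_def
      by (cases "min (ereal (real K)) (INF m\<in>{K..}. u m y)") auto
  qed
  have T0: "0 \<le> T K y" for K y
  proof -
    have "0 \<le> (INF m\<in>{K..}. u m y)" using u0 by (auto intro: INF_greatest)
    then have "ereal 0 \<le> ereal (T K y)" unfolding Tfin by (auto simp: zero_ereal_def)
    then show ?thesis by simp
  qed
  have bdd: "bdd_below (range (\<lambda>y. T K y + real K * dist s y))" for K s
    by (rule bdd_belowI[of _ 0]) (auto intro: add_nonneg_nonneg T0)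
  show psi0: "0 \<le> \<psi> K s" for K s unfolding \<psi>_def
    by (rule cINF_greatest) (auto intro: add_nonneg_nonneg T0)
  have psiT: "\<psi> K s \<le> T K s" for K s unfolding \<psi>_def
    using cINF_lower[OF bdd[of K s], of s] by simp
  have lip: "\<psi> K s \<le> \<psi> K s' + real K * dist s s'" for K s s'
  proof -
    have "\<psi> K s - real K * dist s s' \<le> \<psi> K s'" unfolding \<psi>_def
    proof (rule cINF_greatest)
      fix y
      have "(INF y. T K y + real K * dist s y) \<le> T K y + real K * dist s y"
        using cINF_lower[OF bdd[of K s], of y] by simp
      also have "\<dots> \<le> T K y + real K * dist s' y + real K * dist s s'"
      proof -
        have "real K * dist s y \<le> real K * (dist s s' + dist s' y)"
          using dist_triangle[of s y s'] by (intro mult_left_mono) auto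
        then show ?thesis by (simp add: distrib_left)
      qed
      finally show "(INF y. T K y + real K * dist s y) - real K * dist s s' \<le> T K y + real K * dist s' y"
        by simp
    qed simp
    then show ?thesis by simp
  qed
  have "lipschitz_on (real K) UNIV (\<psi> K)"
  proof (rule lipschitz_onI)
    fix x y :: 'a
    show "dist (\<psi> K x) (\<psi> K y) \<le> real K * dist x y"
      using lip[of K x y] lip[of K y x] by (simp add: dist_real_def dist_commute abs_le_iff)
  qed simp
  then show "continuous_on UNIV (\<psi> K)" by (rule lipschitz_on_continuous_on)
  have le: "\<psi> K s \<le> real K" for s
  proof -
    have "ereal (T K s) \<le> ereal (real K)" unfolding Tfin by simp
    then show ?thesis using psiT[of K s] by simp
  qed
  show "bounded (range (\<psi> K))"
  proof (intro boundedI[of _ "real K"])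
    fix x assume "x \<in> range (\<psi> K)"
    then obtain s where "x = \<psi> K s" by auto
    then show "norm x \<le> real K" using psi0[of K s] le[of s] by auto
  qed
  show "K \<le> n \<Longrightarrow> ereal (\<psi> K s) \<le> u n s"
  proof -
    assume "K \<le> n"
    have "ereal (\<psi> K s) \<le> ereal (T K s)" using psiT by simp
    also have "\<dots> \<le> (INF m\<in>{K..}. u m s)" unfolding Tfin by simp
    also have "\<dots> \<le> u n s" using \<open>K \<le> n\<close> by (auto intro: INF_lower)
    finally show ?thesis .
  qed
  assume d: "\<delta> > 0" and lt: "ereal t < (INF m\<in>{n..}. INF s'\<in>ball s \<delta>. u m s')" and nK: "n \<le> K"
    and tK: "t \<le> real K" and tKd: "t \<le> real K * \<delta>"
  show "t \<le> \<psi> K s" unfolding \<psi>_def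
  proof (rule cINF_greatest)
    fix y
    show "t \<le> T K y + real K * dist s y"
    proof (cases "y \<in> ball s \<delta>")
      case True
      have "(INF m\<in>{n..}. INF s'\<in>ball s \<delta>. u m s') \<le> (INF m\<in>{K..}. u m y)"
      proof (rule INF_greatest)
        fix m assume "m \<in> {K..}"
        then have "(INF m\<in>{n..}. INF s'\<in>ball s \<delta>. u m s') \<le> (INF s'\<in>ball s \<delta>. u m s')"
          using nK by (auto intro: INF_lower)
        also have "\<dots> \<le> u m y" using True by (auto intro: INF_lower)
        finally show "(INF m\<in>{n..}. INF s'\<in>ball s \<delta>. u m s') \<le> u m y" .
      qed
      then have "ereal t \<le> ereal (T K y)" unfolding Tfin using lt tK by auto
      then show ?thesis using d by (simp add: add_increasing2)
    next
      case False
      then have "\<delta> \<le> dist s y" by (simp add: not_less)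
      then have "real K * \<delta> \<le> real K * dist s y" by (simp add: mult_left_mono)
      then show ?thesis using T0[of K y] tKd by linarith
    qed
  qed simp
qed


lemma fatou_nonneg:
  fixes \<mu>n :: "nat \<Rightarrow> 'a::metric_space measure" and \<mu> :: "'a measure"
    and u :: "nat \<Rightarrow> 'a \<Rightarrow> ereal"
  assumes sets_\<mu>: "sets \<mu> = sets borel"
    and weak: "weak_conv \<mu>n \<mu>" and u0: "\<And>n s. 0 \<le> u n s"
  shows "eint \<mu> (joint_liminf u) \<le> liminf (\<lambda>n. eint (\<mu>n n) (u n))"
proof -
  define T where "T \<equiv> \<lambda>K y. real_of_ereal (min (ereal (real K)) (INF m\<in>{K..}. u m y))"
  define \<psi> where "\<psi> \<equiv> \<lambda>K s. (INF y. T K y + real K * dist s y)"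
  have L1: "continuous_on UNIV (\<psi> K)" for K
    unfolding \<psi>_def T_def by (rule lsc_approx(1)[where u=u, OF u0])
  have L2: "bounded (range (\<psi> K))" for K
    unfolding \<psi>_def T_def by (rule lsc_approx(2)[where u=u, OF u0])
  have L3: "0 \<le> \<psi> K s" for K s
    unfolding \<psi>_def T_def by (rule lsc_approx(3)[where u=u, OF u0])
  have L4: "K \<le> n \<Longrightarrow> ereal (\<psi> K s) \<le> u n s" for K n s
    unfolding \<psi>_def T_def by (rule lsc_approx(4)[where u=u, OF u0])
  have L5: "\<lbrakk>\<delta> > 0; ereal t < (INF m\<in>{n..}. INF s'\<in>ball s \<delta>. u m s'); n \<le> K; t \<le> real K; t \<le> real K * \<delta>\<rbrakk>
       \<Longrightarrow> t \<le> \<psi> K s" for \<delta> t n s K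
    unfolding \<psi>_def T_def by (rule lsc_approx(5)[where u=u, OF u0])
  note L = L1 L2 L3 L4 L5
  define Lr where "Lr = liminf (\<lambda>n. eint (\<mu>n n) (u n))"
  have Lr0: "0 \<le> Lr" unfolding Lr_def
    by (intro Liminf_bounded always_eventually allI) (simp add: eint_nonneg u0)
  have eint\<psi>: "eint M (\<lambda>x. ereal (\<psi> K x)) = enn2ereal (\<integral>\<^sup>+ x. ennreal (\<psi> K x) \<partial>M)" for M K
    using eint_nonneg[of "\<lambda>x. ereal (\<psi> K x)" M] L(3) by simp
  have step: "(\<integral>\<^sup>+ x. ennreal (\<psi> K x) \<partial>\<mu>) \<le> e2ennreal Lr" for K
  proof -
    have "(\<lambda>n. eint (\<mu>n n) (\<lambda>x. ereal (\<psi> K x))) \<longlonglongrightarrow> eint \<mu> (\<lambda>x. ereal (\<psi> K x))"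
      using weak L(1) L(2) unfolding weak_conv_def by blast
    then have "eint \<mu> (\<lambda>x. ereal (\<psi> K x)) = liminf (\<lambda>n. eint (\<mu>n n) (\<lambda>x. ereal (\<psi> K x)))"
      by (simp add: lim_imp_Liminf)
    also have "\<dots> \<le> Lr" unfolding Lr_def
      by (intro Liminf_mono) (auto simp: eventually_sequentially intro!: exI[of _ K] eint_mono_AE AE_I2 L(4))
    finally have "enn2ereal (\<integral>\<^sup>+ x. ennreal (\<psi> K x) \<partial>\<mu>) \<le> Lr" by (simp add: eint\<psi>)
    then have "e2ennreal (enn2ereal (\<integral>\<^sup>+ x. ennreal (\<psi> K x) \<partial>\<mu>)) \<le> e2ennreal Lr"
      by (rule e2ennreal_mono)
    then show ?thesis by simp
  qed
  have meas: "(\<lambda>x. ennreal (\<psi> K x)) \<in> borel_measurable \<mu>" for K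
  proof -
    have "\<psi> K \<in> borel_measurable borel" by (rule borel_measurable_continuous_onI[OF L(1)])
    then have "(\<lambda>x. ennreal (\<psi> K x)) \<in> borel_measurable borel" by measurable
    then show ?thesis by (simp add: measurable_cong_sets[OF sets_\<mu> refl])
  qed
  have h0: "0 \<le> joint_liminf u s" for s unfolding joint_liminf_def
    by (intro SUP_upper2[of 1] SUP_upper2[of "1::real"]) (auto intro!: INF_greatest u0)
  have pw: "e2ennreal (joint_liminf u s) \<le> liminf (\<lambda>K. ennreal (\<psi> K s))" for s
    unfolding le_Liminf_iff
  proof (intro allI impI)
    fix y assume y: "y < e2ennreal (joint_liminf u s)"
    then have "y \<noteq> top" using less_le_trans[OF y top_greatest] by auto
    then obtain r where r: "0 \<le> r" "y = ennreal r" by (cases y) auto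
    have "ereal r < joint_liminf u s"
      using y r h0[of s] by (simp add: less_ennreal.rep_eq enn2ereal_e2ennreal)
    then obtain t where t: "ereal r < ereal t" "ereal t < joint_liminf u s"
      using ereal_dense2 by blast
    then obtain n \<delta> where n: "1 \<le> n" "0 < \<delta>" "ereal t < (INF m\<in>{n..}. INF s'\<in>ball s \<delta>. u m s')"
      unfolding joint_liminf_def by (auto simp: less_SUP_iff)
    show "eventually (\<lambda>K. y < ennreal (\<psi> K s)) sequentially"
      unfolding eventually_sequentially
    proof (intro exI[of _ "n + nat \<lceil>t\<rceil> + nat \<lceil>t/\<delta>\<rceil>"] allI impI)
      fix K assume K: "n + nat \<lceil>t\<rceil> + nat \<lceil>t/\<delta>\<rceil> \<le> K"
      have "t \<le> real (nat \<lceil>t\<rceil>)" by (rule real_nat_ceiling_ge)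
      also have "\<dots> \<le> real K" using K by (intro of_nat_mono) linarith
      finally have tK: "t \<le> real K" .
      have "t/\<delta> \<le> real (nat \<lceil>t/\<delta>\<rceil>)" by (rule real_nat_ceiling_ge)
      also have "\<dots> \<le> real K" using K by (intro of_nat_mono) linarith
      finally have "t/\<delta> \<le> real K" .
      then have tKd: "t \<le> real K * \<delta>" using n(2) by (simp add: pos_divide_le_eq)
      have "t \<le> \<psi> K s" using L(5)[OF n(2) n(3) _ tK tKd] K by simp
      then show "y < ennreal (\<psi> K s)" using r t(1) by (simp add: ennreal_less_iff)
    qed
  qed
  have "(\<integral>\<^sup>+ x. e2ennreal (joint_liminf u x) \<partial>\<mu>) \<le> (\<integral>\<^sup>+ x. liminf (\<lambda>K. ennreal (\<psi> K x)) \<partial>\<mu>)"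
    by (intro nn_integral_mono pw)
  also have "\<dots> \<le> liminf (\<lambda>K. \<integral>\<^sup>+ x. ennreal (\<psi> K x) \<partial>\<mu>)"
    by (rule nn_integral_liminf) (rule meas)
  also have "\<dots> \<le> liminf (\<lambda>K. e2ennreal Lr)"
    by (intro Liminf_mono always_eventually allI step)
  also have "\<dots> = e2ennreal Lr" by (simp add: Liminf_const)
  finally have "enn2ereal (\<integral>\<^sup>+ x. e2ennreal (joint_liminf u x) \<partial>\<mu>) \<le> enn2ereal (e2ennreal Lr)"
    by (simp add: less_eq_ennreal.rep_eq[symmetric])
  then show ?thesis using Lr0 h0 by (simp add: eint_nonneg enn2ereal_e2ennreal Lr_def)
qed


lemma ident_enn:
  fixes a b :: ereal
  assumes "0 \<le> a" "b \<noteq> -\<infinity>"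
  shows "e2ennreal (max 0 (a + b)) + e2ennreal (max 0 (- b)) =
         e2ennreal a + e2ennreal (max 0 b) + e2ennreal (max 0 (- (a + b)))"
proof (cases a)
  case (real x)
  note ax = real
  show ?thesis
  proof (cases b)
    case (real y)
    have x0: "0 \<le> x" using assms ax by simp
    have e: "e2ennreal (max 0 (ereal z)) = ennreal z" for z
      by (cases "z \<le> 0") (auto simp: max_def ennreal_neg zero_ereal_def)
    have "ennreal (x + y) + ennreal (- y) = ennreal x + ennreal y + ennreal (- (x + y))"
    proof (cases "0 \<le> y")
      case True then show ?thesis using x0 by (simp add: ennreal_plus ennreal_neg)
    next
      case False
      show ?thesis
      proof (cases "0 \<le> x + y")
        case True
        then have "ennreal (x + y) + ennreal (- y) = ennreal (x + y + - y)"
          using False by (subst ennreal_plus) auto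
        then show ?thesis using False True by (simp add: ennreal_neg)
      next
        case F2: False
        then have "ennreal x + ennreal (- (x + y)) = ennreal (x + - (x + y))"
          using x0 by (subst ennreal_plus) auto
        then show ?thesis using False F2 by (simp add: ennreal_neg)
      qed
    qed
    then show ?thesis using ax real e[of "x + y"] e[of "-y"] e[of y] e[of "-(x+y)"] x0 by simp
  qed (use assms in auto)
qed (use assms in auto)

lemma negfin_AE:
  assumes "g \<in> borel_measurable M" "neg_int M g < \<infinity>"
  shows "AE x in M. g x \<noteq> -\<infinity>"
proof -
  have "AE x in M. e2ennreal (max 0 (- g x)) \<noteq> \<infinity>"
    using assms unfolding neg_int_def by (intro nn_integral_PInf_AE) auto
  then show ?thesis by (rule eventually_mono) auto
qed

lemma final_ar:
  fixes p a gp :: ereal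
  assumes "0 \<le> a" "0 \<le> gp" "p + ereal r2 = a + gp + ereal r"
  shows "p - ereal r = a + (gp - ereal r2)"
  using assms by (cases p; cases a; cases gp) auto

lemma eint_add:
  fixes u g :: "'a \<Rightarrow> ereal"
  assumes u0: "\<And>x. 0 \<le> u x" and um: "u \<in> borel_measurable M" and gm: "g \<in> borel_measurable M"
    and gfin: "neg_int M g < \<infinity>"
  shows "eint M (\<lambda>x. u x + g x) = eint M u + eint M g"
proof -
  have AE: "AE x in M. g x \<noteq> -\<infinity>" using negfin_AE[OF gm gfin] .
  have eq: "(\<integral>\<^sup>+ x. e2ennreal (max 0 (u x + g x)) \<partial>M) + (\<integral>\<^sup>+ x. e2ennreal (max 0 (- g x)) \<partial>M) =
        (\<integral>\<^sup>+ x. e2ennreal (u x) \<partial>M) + (\<integral>\<^sup>+ x. e2ennreal (max 0 (g x)) \<partial>M) +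
        (\<integral>\<^sup>+ x. e2ennreal (max 0 (- (u x + g x))) \<partial>M)"
  proof -
    have "(\<integral>\<^sup>+ x. e2ennreal (max 0 (u x + g x)) \<partial>M) + (\<integral>\<^sup>+ x. e2ennreal (max 0 (- g x)) \<partial>M) =
       (\<integral>\<^sup>+ x. e2ennreal (max 0 (u x + g x)) + e2ennreal (max 0 (- g x)) \<partial>M)"
      using um gm by (intro nn_integral_add[symmetric]) auto
    also have "\<dots> = (\<integral>\<^sup>+ x. e2ennreal (u x) + e2ennreal (max 0 (g x)) + e2ennreal (max 0 (- (u x + g x))) \<partial>M)"
      using AE by (intro nn_integral_cong_AE) (auto elim!: eventually_mono simp: ident_enn u0)
    also have "\<dots> = (\<integral>\<^sup>+ x. e2ennreal (u x) + e2ennreal (max 0 (g x)) \<partial>M) +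
        (\<integral>\<^sup>+ x. e2ennreal (max 0 (- (u x + g x))) \<partial>M)"
      using um gm by (intro nn_integral_add) auto
    also have "(\<integral>\<^sup>+ x. e2ennreal (u x) + e2ennreal (max 0 (g x)) \<partial>M) =
       (\<integral>\<^sup>+ x. e2ennreal (u x) \<partial>M) + (\<integral>\<^sup>+ x. e2ennreal (max 0 (g x)) \<partial>M)"
      using um gm by (intro nn_integral_add) auto
    finally show ?thesis .
  qed
  have Nle: "(\<integral>\<^sup>+ x. e2ennreal (max 0 (- (u x + g x))) \<partial>M) \<le> neg_int M g"
    unfolding neg_int_def
  proof (intro nn_integral_mono e2ennreal_mono max.mono order_refl)
    fix x have "g x \<le> u x + g x" using u0[of x] by (metis add_increasing order_refl)
    then show "- (u x + g x) \<le> - g x" by simp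
  qed
  obtain r where r: "neg_int M g = ennreal r" "0 \<le> r" using gfin by (cases "neg_int M g") auto
  obtain r' where r': "(\<integral>\<^sup>+ x. e2ennreal (max 0 (- (u x + g x))) \<partial>M) = ennreal r'" "0 \<le> r'"
    using Nle gfin by (cases "(\<integral>\<^sup>+ x. e2ennreal (max 0 (- (u x + g x))) \<partial>M)") auto
  have eq2: "enn2ereal (\<integral>\<^sup>+ x. e2ennreal (max 0 (u x + g x)) \<partial>M) + ereal r =
      enn2ereal (\<integral>\<^sup>+ x. e2ennreal (u x) \<partial>M) + enn2ereal (\<integral>\<^sup>+ x. e2ennreal (max 0 (g x)) \<partial>M) + ereal r'"
    using arg_cong[OF eq, of enn2ereal] r r' unfolding neg_int_def by (simp add: plus_ennreal.rep_eq)
  show ?thesis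
    unfolding eint_def pos_int_def neg_int_def
    using final_ar[OF _ _ eq2] r r' u0 unfolding neg_int_def
    by (simp add: eint_nonneg[of u, unfolded eint_def pos_int_def neg_int_def] e2ennreal_neg zero_ennreal.rep_eq)
qed

lemma negfin:
  assumes "eint_defined M h" "- \<infinity> < eint M h"
  shows "neg_int M h < \<infinity>"
  using assms unfolding eint_defined_def eint_def
  by (cases "pos_int M h"; cases "neg_int M h") (auto simp: top_unique)

lemma joint_liminf_nonneg:
  assumes "\<And>n s. 0 \<le> u n s"
  shows "0 \<le> joint_liminf u s"
  unfolding joint_liminf_def
  by (intro SUP_upper2[of 1] SUP_upper2[of "1::real"]) (auto intro!: INF_greatest assms)


lemma split_ereal:
  fixes a b :: ereal
  assumes "0 \<le> a" "a \<noteq> \<infinity>" "b \<noteq> \<infinity>" "a + b < ereal r"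
  shows "\<exists>r1 r2. a < ereal r1 \<and> b < ereal r2 \<and> r1 + r2 = r"
proof -
  obtain x where x: "a = ereal x" using assms by (cases a) auto
  show ?thesis
  proof (cases b)
    case (real y)
    then show ?thesis using x assms
      by (intro exI[of _ "x + (r - x - y)/2"] exI[of _ "y + (r - x - y)/2"]) auto
  next
    case MInf
    then show ?thesis using x by (intro exI[of _ "x + 1"] exI[of _ "r - x - 1"]) auto
  qed (use assms in auto)
qed

theorem corollary2p7:
  fixes \<mu>n :: "nat \<Rightarrow> 'a::metric_space measure" and \<mu> :: "'a measure"
    and f g :: "nat \<Rightarrow> 'a \<Rightarrow> ereal"
  assumes sets_\<mu>n: "\<And>n. sets (\<mu>n n) = sets borel"
    and sets_\<mu>: "sets \<mu> = sets borel"
    and fin: "finite_measure \<mu>"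
    and weak: "weak_conv \<mu>n \<mu>"
    and f_meas: "\<And>n. f n \<in> borel_measurable borel"
    and g_meas: "\<And>n. g n \<in> borel_measurable borel"
    and fg: "\<And>n s. f n s \<ge> g n s"
    and def_g_lim: "eint_defined \<mu> (joint_limsup g)"
    and def_g_n: "\<And>n. n \<ge> 1 \<Longrightarrow> eint_defined (\<mu>n n) (g n)"
    and hyp1: "- \<infinity> < eint \<mu> (joint_limsup g)"
    and hyp2: "eint \<mu> (joint_limsup g) \<le> liminf (\<lambda>n. eint (\<mu>n n) (g n))"
    and def_f_lim: "eint_defined \<mu> (joint_liminf f)"
    and def_f_n: "\<And>n. n \<ge> 1 \<Longrightarrow> eint_defined (\<mu>n n) (f n)"
  shows "eint \<mu> (joint_liminf f) \<le> liminf (\<lambda>n. eint (\<mu>n n) (f n))"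
proof -
  define u where "u = (\<lambda>n s. f n s - g n s)"
  have u0: "0 \<le> u n s" for n s
    unfolding u_def using fg[of n s] by (cases "f n s"; cases "g n s") auto
  have fug: "f n s = u n s + g n s" if "g n s \<noteq> -\<infinity>" for n s
    unfolding u_def using fg[of n s] that by (cases "f n s"; cases "g n s") auto
  have ginf: "u n s = \<infinity>" if "g n s = -\<infinity>" for n s
    unfolding u_def using that by (cases "f n s") auto
  have u_meas: "u n \<in> borel_measurable borel" for n
    unfolding u_def using f_meas[of n] g_meas[of n] by measurable
  define A where "A = joint_liminf u"
  define G where "G = joint_limsup g"
  define H where "H = joint_liminf f"
  have A0: "0 \<le> A s" for s unfolding A_def by (rule joint_liminf_nonneg[OF u0])
  have pw: "H s \<le> A s + G s" for s
  proof (cases "A s = \<infinity> \<or> G s = \<infinity>")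
    case True then show ?thesis by auto
  next
    case False
    show ?thesis
    proof (rule dense_ge)
      fix y assume y: "A s + G s < y"
      show "H s \<le> y"
      proof (cases y)
        case (real r)
        obtain r1 r2 where r12: "A s < ereal r1" "G s < ereal r2" "r1 + r2 = r"
          using split_ereal[OF A0 _ _ y[unfolded real]] False by blast
        obtain n1 \<delta>1 where n1: "1 \<le> n1" "0 < \<delta>1" "(SUP m\<in>{n1..}. SUP s'\<in>ball s \<delta>1. g m s') < ereal r2"
          using r12(2) unfolding G_def joint_limsup_def by (auto simp: INF_less_iff)
        show ?thesis unfolding H_def joint_liminf_def
        proof (intro SUP_least)
          fix n :: nat and \<delta> :: real assume n: "n \<in> {1..}" and d: "\<delta> \<in> {0<..}"
          define N where "N = max n n1"
          define \<delta>' where "\<delta>' = min \<delta> \<delta>1"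
          have "(INF m\<in>{N..}. INF s'\<in>ball s \<delta>'. u m s') \<le> A s"
            unfolding A_def joint_liminf_def using n d n1
            by (intro SUP_upper2[of N] SUP_upper2[of \<delta>']) (auto simp: N_def \<delta>'_def)
          then have "(INF m\<in>{N..}. INF s'\<in>ball s \<delta>'. u m s') < ereal r1" using r12(1) by auto
          then obtain m s' where m: "N \<le> m" "s' \<in> ball s \<delta>'" "u m s' < ereal r1"
            by (auto simp: INF_less_iff)
          have "g m s' \<le> (SUP m\<in>{n1..}. SUP s'\<in>ball s \<delta>1. g m s')"
            using m by (intro SUP_upper2[of m] SUP_upper2[of s']) (auto simp: N_def \<delta>'_def)
          then have gl: "g m s' < ereal r2" using n1(3) by auto
          have gn: "g m s' \<noteq> -\<infinity>" using ginf[of m s'] m(3) by auto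
          have "f m s' = u m s' + g m s'" by (rule fug[OF gn])
          also have "\<dots> < ereal r1 + ereal r2"
            using m(3) gl gn u0[of m s'] by (cases "u m s'"; cases "g m s'") auto
          finally have "f m s' \<le> y" using r12(3) real by simp
          moreover have "(INF m\<in>{n..}. INF s'\<in>ball s \<delta>. f m s') \<le> f m s'"
            using m by (intro INF_lower2[of m] INF_lower2[of s']) (auto simp: N_def \<delta>'_def)
          ultimately show "(INF m\<in>{n..}. INF s'\<in>ball s \<delta>. f m s') \<le> y" by simp
        qed
      qed (use y in auto)
    qed
  qed
  have mu_meas: "h \<in> borel_measurable \<mu>" if "h \<in> borel_measurable borel" for h :: "'a \<Rightarrow> ereal"
    using that by (simp add: measurable_cong_sets[OF sets_\<mu> refl])
  have mun_meas: "h \<in> borel_measurable (\<mu>n n)" if "h \<in> borel_measurable borel" for h :: "'a \<Rightarrow> ereal" and n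
    using that by (simp add: measurable_cong_sets[OF sets_\<mu>n refl])
  have negG: "neg_int \<mu> G < \<infinity>" unfolding G_def by (rule negfin[OF def_g_lim hyp1])
  have "eint \<mu> H \<le> eint \<mu> (\<lambda>s. A s + G s)" by (rule eint_mono_AE) (simp add: pw)
  also have "\<dots> = eint \<mu> A + eint \<mu> G"
    by (rule eint_add[OF A0 _ _ negG]) (auto intro!: mu_meas simp: A_def G_def joint_liminf_meas joint_limsup_meas)
  also have "\<dots> \<le> liminf (\<lambda>n. eint (\<mu>n n) (u n)) + liminf (\<lambda>n. eint (\<mu>n n) (g n))"
    unfolding A_def G_def by (intro add_mono fatou_nonneg[OF sets_\<mu> weak u0] hyp2)
  also have "\<dots> \<le> liminf (\<lambda>n. eint (\<mu>n n) (u n) + eint (\<mu>n n) (g n))"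
  proof (rule ereal_liminf_add_mono)
    have "0 \<le> liminf (\<lambda>n. eint (\<mu>n n) (u n))"
      by (intro Liminf_bounded always_eventually allI) (simp add: eint_nonneg u0)
    moreover have "- \<infinity> < liminf (\<lambda>n. eint (\<mu>n n) (g n))" using hyp1 hyp2 by auto
    ultimately show "\<not> (liminf (\<lambda>n. eint (\<mu>n n) (u n)) = \<infinity> \<and> liminf (\<lambda>n. eint (\<mu>n n) (g n)) = - \<infinity> \<or>
        liminf (\<lambda>n. eint (\<mu>n n) (u n)) = - \<infinity> \<and> liminf (\<lambda>n. eint (\<mu>n n) (g n)) = \<infinity>)"
      by auto
  qed
  also have "\<dots> \<le> liminf (\<lambda>n. eint (\<mu>n n) (f n))"
  proof (intro Liminf_mono)
    have "- \<infinity> < liminf (\<lambda>n. eint (\<mu>n n) (g n))" using hyp1 hyp2 by auto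
    then have ev: "eventually (\<lambda>n. - \<infinity> < eint (\<mu>n n) (g n)) sequentially" by (rule less_LiminfD)
    show "eventually (\<lambda>n. eint (\<mu>n n) (u n) + eint (\<mu>n n) (g n) \<le> eint (\<mu>n n) (f n)) sequentially"
    proof (rule eventually_mono[OF eventually_conj[OF ev eventually_ge_at_top[of 1]]])
      fix n assume nn: "- \<infinity> < eint (\<mu>n n) (g n) \<and> 1 \<le> n"
      then have gfin: "neg_int (\<mu>n n) (g n) < \<infinity>" using negfin[OF def_g_n] by auto
      have "eint (\<mu>n n) (u n) + eint (\<mu>n n) (g n) = eint (\<mu>n n) (\<lambda>x. u n x + g n x)"
        by (rule eint_add[symmetric, OF u0 _ _ gfin]) (auto intro!: mun_meas u_meas g_meas)
      also have "\<dots> \<le> eint (\<mu>n n) (f n)"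
        using negfin_AE[OF mun_meas[OF g_meas] gfin]
        by (intro eint_mono_AE) (auto elim!: eventually_mono simp: fug)
      finally show "eint (\<mu>n n) (u n) + eint (\<mu>n n) (g n) \<le> eint (\<mu>n n) (f n)" .
    qed
  qed
  finally show ?thesis unfolding H_def .
qed

end
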